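(* Let $\gamma>0$, $n\in\mathbb{N}^*$, $\lambda_n=\lambda_{n,\gamma}$, $v_n$ the positive $L^2(-1,1)$-normalized first eigenfunction of $A_{n,\gamma}$, and $x_n=\big(\lambda_n/(n\pi)^2\big)^{1/(2\gamma)}$, assumed to satisfy $x_n\le1$. Then $|v_n'(x_n)|\le\sqrt{x_n}\,\lambda_n$.
   Context: $A_{n,\gamma}\varphi=-\varphi''+(n\pi)^2|x|^{2\gamma}\varphi$ with domain $H^2(-1,1)\cap H^1_0(-1,1)$; $\lambda_{n,\gamma}$ is its smallest eigenvalue and $v_n>0$ solves $-v_n''+[(n\pi)^2|x|^{2\gamma}-\lambda_n]v_n=0$ on $(-1,1)$, $v_n(\pm1)=0$, $\|v_n\|_{L^2(-1,1)}=1$. *)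

theory Defs
  imports "HOL-Analysis.Analysis"
begin

definition pot :: "nat \<Rightarrow> real \<Rightarrow> real \<Rightarrow> real" where
  "pot n \<gamma> x = (real n * pi)^2 * \<bar>x\<bar> powr (2 * \<gamma>)"

definition in_dom :: "(real \<Rightarrow> real) \<Rightarrow> bool" where
  "in_dom w \<longleftrightarrow> (\<exists>w' w''.
     (\<forall>x\<in>{-1..1}. (w has_real_derivative w' x) (at x within {-1..1}) \<and>
                   (w' has_real_derivative w'' x) (at x within {-1..1})) \<and>
     continuous_on {-1..1} w'' \<and> w (-1) = 0 \<and> w 1 = 0)"

definition is_eigenpair :: "nat \<Rightarrow> real \<Rightarrow> real \<Rightarrow> (real \<Rightarrow> real) \<Rightarrow> bool" where
  "is_eigenpair n \<gamma> \<mu> w \<longleftrightarrow> in_dom w \<and> (\<exists>x\<in>{-1..1}. w x \<noteq> 0) \<and>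
     (\<exists>w' w''. (\<forall>x\<in>{-1..1}. (w has_real_derivative w' x) (at x within {-1..1}) \<and>
                   (w' has_real_derivative w'' x) (at x within {-1..1}) \<and>
                   - w'' x + pot n \<gamma> x * w x = \<mu> * w x))"

definition is_eigenvalue :: "nat \<Rightarrow> real \<Rightarrow> real \<Rightarrow> bool" where
  "is_eigenvalue n \<gamma> \<mu> \<longleftrightarrow> (\<exists>w. is_eigenpair n \<gamma> \<mu> w)"

end

theory Submission
  imports Defs
begin

lemma mvt_sub:
  fixes f f' :: "real \<Rightarrow> real"
  assumes D: "\<forall>x\<in>{-1..1}. (f has_real_derivative f' x) (at x within {-1..1})"
    and "-1 \<le> p" "p < q" "q \<le> 1"
  shows "\<exists>z. p < z \<and> z < q \<and> f q - f p = f' z * (q - p)"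
proof -
  have "(f has_derivative (\<lambda>h. f' x * h)) (at x within {p..q})" if "p \<le> x" "x \<le> q" for x
  proof -
    have "(f has_real_derivative f' x) (at x within {-1..1})" using D that assms by auto
    then have "(f has_real_derivative f' x) (at x within {p..q})"
      by (rule DERIV_subset) (use assms in auto)
    then show ?thesis by (simp add: has_field_derivative_def)
  qed
  from mvt_simple[OF \<open>p < q\<close> this] show ?thesis by auto
qed

lemma pot_even: "pot n \<gamma> (-x) = pot n \<gamma> x"
  by (simp add: pot_def)

lemma pot_nonneg: "pot n \<gamma> x \<ge> 0"
  by (simp add: pot_def)

theorem mainTheorem8:
  fixes \<gamma> lam :: real and n :: nat and v v' v'' :: "real \<Rightarrow> real"
  assumes "\<gamma> > 0" and "n \<ge> 1"
    and "is_eigenvalue n \<gamma> lam"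
    and "\<forall>\<mu>. is_eigenvalue n \<gamma> \<mu> \<longrightarrow> lam \<le> \<mu>"
    and "\<forall>x\<in>{-1..1}. (v has_real_derivative v' x) (at x within {-1..1})"
    and "\<forall>x\<in>{-1..1}. (v' has_real_derivative v'' x) (at x within {-1..1})"
    and "continuous_on {-1..1} v''"
    and "\<forall>x\<in>{-1..1}. - v'' x + (pot n \<gamma> x - lam) * v x = 0"
    and "v (-1) = 0" and "v 1 = 0"
    and "\<forall>x\<in>{-1<..<1}. v x > 0"
    and "integral {-1..1} (\<lambda>x. (v x)^2) = 1"
    and "(lam / (real n * pi)^2) powr (1 / (2 * \<gamma>)) \<le> 1"
  shows "\<bar>v' ((lam / (real n * pi)^2) powr (1 / (2 * \<gamma>)))\<bar>
           \<le> sqrt ((lam / (real n * pi)^2) powr (1 / (2 * \<gamma>))) * lam"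
proof -
  note D1 = assms(5) and D2 = assms(6) and ode = assms(8) and pos = assms(11)
  let ?S = "{-1..1::real}"
  have vnn: "v x \<ge> 0" if "x \<in> ?S" for x
    using that pos assms(9,10) by (cases "x = -1 \<or> x = 1") (auto simp: less_le)
  have v''eq: "v'' x = (pot n \<gamma> x - lam) * v x" if "x \<in> ?S" for x
    using ode that by auto
  have imS: "uminus ` ?S = ?S" by (simp add: image_uminus_atLeastAtMost)
  \<comment> \<open>Wronskian of v and v(-x)\<close>
  define W where "W x = v x * (- v' (-x)) - v' x * v (-x)" for x
  have WD: "(W has_real_derivative 0) (at x within ?S)" if x: "x \<in> ?S" for x
  proof -
    have mx: "-x \<in> ?S" using x by auto
    have a: "(v \<circ> uminus has_real_derivative v' (-x) * (-1)) (at x within ?S)"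
      by (rule DERIV_image_chain) (use D1 mx imS in \<open>auto intro!: derivative_eq_intros\<close>)
    have b: "(v' \<circ> uminus has_real_derivative v'' (-x) * (-1)) (at x within ?S)"
      by (rule DERIV_image_chain) (use D2 mx imS in \<open>auto intro!: derivative_eq_intros\<close>)
    have c: "(W has_real_derivative
        (v' x * (- v' (-x)) + v x * (- (v'' (-x) * (-1))) - (v'' x * v (-x) + v' x * (v' (-x) * (-1)))))
        (at x within ?S)"
      unfolding W_def
      using a b D1 D2 x
      by (auto simp: o_def intro!: derivative_eq_intros)
    have "v' x * (- v' (-x)) + v x * (- (v'' (-x) * (-1))) - (v'' x * v (-x) + v' x * (v' (-x) * (-1))) = 0"
    proof -
      have e1: "v'' x = (pot n \<gamma> x - lam) * v x" using v''eq[OF x] .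
      have e2: "v'' (-x) = (pot n \<gamma> x - lam) * v (-x)" using v''eq[OF mx] by (simp add: pot_even)
      show ?thesis unfolding e1 e2 by (simp add: algebra_simps)
    qed
    with c show ?thesis by simp
  qed
  obtain c where Wc: "\<forall>x\<in>?S. W x = c"
    using has_field_derivative_zero_constant[of ?S W] WD by auto
  have "W 0 = W 1" using Wc by auto
  then have "- 2 * v 0 * v' 0 = 0" unfolding W_def using assms(9,10) by simp
  moreover have "v 0 > 0" using pos by auto
  ultimately have v'0: "v' 0 = 0" by simp
  have lampos: "lam > 0"
  proof (rule ccontr)
    assume "\<not> lam > 0"
    then have "v'' x \<ge> 0" if "x \<in> ?S" for x
      using v''eq[OF that] vnn[OF that] pot_nonneg[of n \<gamma> x] by simp
    obtain z where z: "0 < z" "z < 1" "v 1 - v 0 = v' z * (1 - 0)"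
      using mvt_sub[OF D1, of 0 1] by auto
    obtain y where y: "0 < y" "y < z" "v' z - v' 0 = v'' y * (z - 0)"
      using mvt_sub[OF D2, of 0 z] z by auto
    have "v'' y \<ge> 0" using \<open>\<And>x. x \<in> ?S \<Longrightarrow> v'' x \<ge> 0\<close> y z by auto
    then have "v' z \<ge> 0" using y v'0 by simp
    then show False using z assms(10) \<open>v 0 > 0\<close> by simp
  qed
  define K where "K = (real n * pi)^2"
  have Kpos: "K > 0" using assms(2) by (simp add: K_def)
  define a where "a = (lam / K) powr (1 / (2 * \<gamma>))"
  have apos: "a > 0" using lampos Kpos by (simp add: a_def)
  have a1: "a \<le> 1" using assms(13) by (simp add: a_def K_def)
  have apow: "a powr (2 * \<gamma>) = lam / K"
    using lampos Kpos assms(1) by (simp add: a_def powr_powr)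
  have potle: "0 \<le> pot n \<gamma> x \<and> pot n \<gamma> x \<le> lam" if "0 \<le> x" "x \<le> a" for x
  proof -
    have "x powr (2 * \<gamma>) \<le> a powr (2 * \<gamma>)"
      using that assms(1) by (intro powr_mono2) auto
    then have "K * x powr (2 * \<gamma>) \<le> K * (lam / K)" using apow Kpos by (intro mult_left_mono) auto
    then show ?thesis using Kpos that pot_nonneg[of n \<gamma> x] by (simp add: pot_def K_def)
  qed
  have sub: "{0..a} \<subseteq> ?S" using a1 by auto
  have ftc: "(v'' has_integral v' a - v' 0) {0..a}"
  proof (rule fundamental_theorem_of_calculus)
    show "0 \<le> a" using apos by simp
    fix x assume "x \<in> {0..a}"
    then have "(v' has_real_derivative v'' x) (at x within {0..a})"
      using D2 sub by (meson DERIV_subset subsetD)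
    then show "(v' has_vector_derivative v'' x) (at x within {0..a})"
      by (simp add: has_real_derivative_iff_has_vector_derivative)
  qed
  have vcont: "continuous_on ?S v" using D1 by (intro DERIV_continuous_on) auto
  have v2int: "(\<lambda>x. (v x)^2) integrable_on T" if "T \<subseteq> ?S" "T = {0..a} \<or> T = ?S" for T
  proof -
    have "continuous_on T (\<lambda>x. (v x)^2)"
      using continuous_on_subset[OF vcont that(1)] by (intro continuous_intros)
    then show ?thesis using that(2) by (auto intro: integrable_continuous_interval)
  qed
  define s where "s = sqrt a"
  have spos: "s > 0" using apos by (simp add: s_def)
  define g where "g x = lam * (s * (v x)^2 / 2 + 1 / (2 * s))" for x
  have gint: "g integrable_on {0..a}"
  proof -
    have "continuous_on {0..a} g"
      unfolding g_def using continuous_on_subset[OF vcont sub] by (auto intro!: continuous_intros)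
    then show ?thesis by (rule integrable_continuous_interval)
  qed
  have bound: "norm (v'' x) \<le> g x" if "x \<in> {0..a}" for x
  proof -
    have xS: "x \<in> ?S" using that sub by auto
    have "\<bar>v'' x\<bar> = (lam - pot n \<gamma> x) * v x"
      using v''eq[OF xS] potle[of x] that vnn[OF xS] by (simp add: abs_mult)
    also have "\<dots> \<le> lam * v x"
      using potle[of x] that vnn[OF xS] by (simp add: mult_right_mono)
    also have "\<dots> \<le> g x"
    proof -
      have "0 \<le> (s * v x - 1)^2" by simp
      then have "2 * s * v x \<le> s^2 * (v x)^2 + 1" by (simp add: power2_eq_square algebra_simps)
      then have "v x \<le> s * (v x)^2 / 2 + 1 / (2 * s)"
        using spos by (simp add: field_simps power2_eq_square)
      then show ?thesis unfolding g_def using lampos by simp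
    qed
    finally show ?thesis by simp
  qed
  have "norm (integral {0..a} v'') \<le> integral {0..a} g"
    by (rule integral_norm_bound_integral) (use ftc gint bound in auto)
  then have l1: "\<bar>v' a\<bar> \<le> integral {0..a} g" using ftc v'0 by (simp add: integral_unique)
  have I01: "integral {0..a} (\<lambda>x. (v x)^2) \<le> 1"
    using integral_subset_le[OF sub v2int[of "{0..a}"] v2int[of ?S]] sub assms(12) by auto
  have ig: "integral {0..a} g = lam * (s / 2 * integral {0..a} (\<lambda>x. (v x)^2) + a / (2 * s))"
  proof -
    have galt: "g = (\<lambda>x. (lam * (s / 2)) * (v x)^2 + lam / (2 * s))"
      by (rule ext) (simp add: g_def algebra_simps)
    have h1: "((\<lambda>x. (lam * (s / 2)) * (v x)^2) has_integral (lam * (s / 2)) * integral {0..a} (\<lambda>x. (v x)^2)) {0..a}"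
      using v2int[of "{0..a}"] sub by (intro has_integral_mult_right integrable_integral) auto
    have h2: "((\<lambda>x. lam / (2 * s)) has_integral (lam / (2 * s)) * (a - 0)) {0..a}"
      using has_integral_const_real[of "lam / (2 * s)" 0 a] apos by (simp add: mult.commute)
    have "(g has_integral (lam * (s / 2)) * integral {0..a} (\<lambda>x. (v x)^2) + (lam / (2 * s)) * (a - 0)) {0..a}"
      unfolding galt by (rule has_integral_add[OF h1 h2])
    then show ?thesis by (simp add: integral_unique algebra_simps)
  qed
  have ss: "s * s = a" using apos by (simp add: s_def)
  have "integral {0..a} g \<le> lam * (s / 2 * 1 + a / (2 * s))"
    unfolding ig using lampos spos I01 by (intro mult_left_mono add_right_mono) auto
  also have "\<dots> = s * lam" using spos ss[symmetric] by (simp add: field_simps)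
  finally have "\<bar>v' a\<bar> \<le> s * lam" using l1 by simp
  then show ?thesis by (simp add: s_def a_def K_def)
qed

end
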